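(* Let $\mathcal{H}$ be an $n$-dimensional (real or complex) Hilbert space, let $(F,G)$ be an $(N,n)$ dual pair in $\mathcal{H}$, let $U$ be a unitary operator on $\mathcal{H}$, and let $\{q_i\}_{i=1}^N$ be the weight number sequence associated with a probability sequence $\{p_i\}_{i=1}^N$. Then $(F,G)\in\zeta_P^{(1)}$ if and only if $(UF,UG)\in\zeta_P^{(1)}$, where $UF=\{Uf_i\}_{i=1}^N$, $UG=\{Ug_i\}_{i=1}^N$.
   Context: A finite sequence $F=\{f_i\}_{i=1}^N$ in $\mathcal{H}$ is a frame if there are $A,B>0$ with $A\|f\|^2\le\sum_{i=1}^N|\langle f,f_i\rangle|^2\le B\|f\|^2$ for all $f$. A frame $G=\{g_i\}_{i=1}^N$ is a dual of $F$ if $f=\sum_i\langle f,f_i\rangle g_i=\sum_i\langle f,g_i\rangle f_i$ for all $f$; then $(F,G)$ is an $(N,n)$ dual pair. A probability sequence is $\{p_i\}_{i=1}^N$ with $0\le p_i\le1$, $\sum p_i=1$; weight numbers $q_i=\frac{\sum_{j} p_j}{\sum_{j} p_j-p_i}\cdot\frac{N-1}{n}$. For $\Lambda\subseteq\{1,\dots,N\}$ the error operator is $E_{\Lambda,(F,G)}f=\sum_{i\in\Lambda}q_i\langle f,f_i\rangle g_i$, and $\mathcal{A}_P^{(1)}(F,G)=\max_{|\Lambda|=1}\frac{\|E_{\Lambda,(F,G)}\|+\rho(E_{\Lambda,(F,G)})}{2}$ (operator norm and spectral radius). Let $\mathcal{A}_P^{(1)}=\inf\{\mathcal{A}_P^{(1)}(F,G):(F,G)\text{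 an }(N,n)\text{ dual pair in }\mathcal{H}\}$. A dual pair is a 1-erasure PASOD-pair if $\mathcal{A}_P^{(1)}(F,G)=\mathcal{A}_P^{(1)}$; $\zeta_P^{(1)}$ is the set of such pairs. *)

theory Defs
  imports "Jordan_Normal_Form.Spectral_Radius" "Jordan_Normal_Form.Schur_Decomposition"
begin

text \<open>The n-dimensional Hilbert space H is modelled as K^n (vectors of dimension n, as
  complex vectors whose entries lie in the scalar field K), where K is either the reals
  (embedded in the complex numbers) or all complex numbers. Frames are indexed by 0..<N.\<close>

definition scalar_field :: "complex set \<Rightarrow> bool" where
  "scalar_field K \<longleftrightarrow> K = \<real> \<or> K = UNIV"

definition hspace :: "complex set \<Rightarrow> nat \<Rightarrow> complex vec set" where
  "hspace K n = {v \<in> carrier_vec n. \<forall>j<n. v $ j \<in> K}"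

definition hinner :: "complex vec \<Rightarrow> complex vec \<Rightarrow> complex" where
  "hinner f g = f \<bullet>c g"

definition hnorm :: "complex vec \<Rightarrow> real" where
  "hnorm v = sqrt (\<Sum>j<dim_vec v. (cmod (v $ j))\<^sup>2)"

definition is_frame :: "complex set \<Rightarrow> nat \<Rightarrow> nat \<Rightarrow> (nat \<Rightarrow> complex vec) \<Rightarrow> bool" where
  "is_frame K n N F \<longleftrightarrow> (\<forall>i<N. F i \<in> hspace K n) \<and>
     (\<exists>A B. A > 0 \<and> B > 0 \<and> (\<forall>f\<in>hspace K n.
        A * (hnorm f)\<^sup>2 \<le> (\<Sum>i<N. (cmod (hinner f (F i)))\<^sup>2) \<and>
        (\<Sum>i<N. (cmod (hinner f (F i)))\<^sup>2) \<le> B * (hnorm f)\<^sup>2))"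

definition dual_pair :: "complex set \<Rightarrow> nat \<Rightarrow> nat \<Rightarrow> (nat \<Rightarrow> complex vec) \<Rightarrow> (nat \<Rightarrow> complex vec) \<Rightarrow> bool" where
  "dual_pair K n N F G \<longleftrightarrow> is_frame K n N F \<and> is_frame K n N G \<and>
     (\<forall>f\<in>hspace K n.
        f = finsum_vec TYPE(complex) n (\<lambda>i. hinner f (F i) \<cdot>\<^sub>v G i) {..<N} \<and>
        f = finsum_vec TYPE(complex) n (\<lambda>i. hinner f (G i) \<cdot>\<^sub>v F i) {..<N})"

definition prob_seq :: "nat \<Rightarrow> (nat \<Rightarrow> real) \<Rightarrow> bool" where
  "prob_seq N p \<longleftrightarrow> (\<forall>i<N. 0 \<le> p i \<and> p i \<le> 1) \<and> (\<Sum>i<N. p i) = 1"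

definition weight :: "nat \<Rightarrow> nat \<Rightarrow> (nat \<Rightarrow> real) \<Rightarrow> nat \<Rightarrow> real" where
  "weight N n p i = (\<Sum>j<N. p j) / ((\<Sum>j<N. p j) - p i) * ((real N - 1) / real n)"

text \<open>Error operator for \<Lambda> = {i}: f \<mapsto> q_i <f,f_i> g_i, as an n x n matrix.\<close>
definition err_op :: "nat \<Rightarrow> (nat \<Rightarrow> real) \<Rightarrow> (nat \<Rightarrow> complex vec) \<Rightarrow> (nat \<Rightarrow> complex vec) \<Rightarrow> nat \<Rightarrow> complex mat" where
  "err_op n q F G i = mat n n (\<lambda>(j,k). complex_of_real (q i) * (G i $ j) * cnj (F i $ k))"

definition op_norm :: "complex set \<Rightarrow> nat \<Rightarrow> complex mat \<Rightarrow> real" where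
  "op_norm K n E = Sup {hnorm (E *\<^sub>v v) | v. v \<in> hspace K n \<and> hnorm v \<le> 1}"

definition A1 :: "complex set \<Rightarrow> nat \<Rightarrow> nat \<Rightarrow> (nat \<Rightarrow> real) \<Rightarrow> (nat \<Rightarrow> complex vec) \<Rightarrow> (nat \<Rightarrow> complex vec) \<Rightarrow> real" where
  "A1 K n N q F G = Max ((\<lambda>i. (op_norm K n (err_op n q F G i) + spectral_radius (err_op n q F G i)) / 2) ` {..<N})"

definition A1_opt :: "complex set \<Rightarrow> nat \<Rightarrow> nat \<Rightarrow> (nat \<Rightarrow> real) \<Rightarrow> real" where
  "A1_opt K n N q = Inf {A1 K n N q F G | F G. dual_pair K n N F G}"

definition PASOD1 :: "complex set \<Rightarrow> nat \<Rightarrow> nat \<Rightarrow> (nat \<Rightarrow> real) \<Rightarrow> ((nat \<Rightarrow> complex vec) \<times> (nat \<Rightarrow> complex vec)) set" where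
  "PASOD1 K n N q = {(F, G). dual_pair K n N F G \<and> A1 K n N q F G = A1_opt K n N q}"

definition unitary_op :: "complex set \<Rightarrow> nat \<Rightarrow> complex mat \<Rightarrow> bool" where
  "unitary_op K n U \<longleftrightarrow> U \<in> carrier_mat n n \<and> (\<forall>j<n. \<forall>k<n. U $$ (j,k) \<in> K) \<and>
     mat_adjoint U * U = 1\<^sub>m n"

end

theory Submission imports Defs begin

lemma mv_index: assumes "U \<in> carrier_mat n n" "v \<in> carrier_vec n" "j < n"
  shows "(U *\<^sub>v v) $ j = (\<Sum>k<n. U $$ (j,k) * v $ k)"
  using assms by (simp add: scalar_prod_def atLeast0LessThan)

lemma hinner_sum: assumes "w \<in> carrier_vec n"
  shows "hinner v w = (\<Sum>j<n. v $ j * cnj (w $ j))"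
  using assms by (simp add: hinner_def scalar_prod_def atLeast0LessThan)

lemma adj_index: assumes "U \<in> carrier_mat n n" "a < n" "b < n"
  shows "mat_adjoint U $$ (a,b) = cnj (U $$ (b,a))"
  using assms by (simp add: mat_adjoint_def mat_of_rows_def)

lemma adj_carrier: assumes "U \<in> carrier_mat n n"
  shows "mat_adjoint U \<in> carrier_mat n n"
proof -
  have "length (map conjugate (cols U)) = n" "dim_row U = n" using assms by auto
  then show ?thesis unfolding mat_adjoint_def using mat_of_rows_carrier(1)[of n "map conjugate (cols U)"] by metis
qed

lemma hinner_adj: assumes U: "U \<in> carrier_mat n n" and v: "v \<in> carrier_vec n" and w: "w \<in> carrier_vec n"
  shows "hinner (U *\<^sub>v v) w = hinner v (mat_adjoint U *\<^sub>v w)"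
proof -
  have "hinner (U *\<^sub>v v) w = (\<Sum>j<n. (\<Sum>k<n. U $$ (j,k) * v $ k) * cnj (w $ j))"
    using assms by (simp add: hinner_sum[OF w] mv_index del: index_mult_mat_vec)
  also have "\<dots> = (\<Sum>j<n. \<Sum>k<n. U $$ (j,k) * v $ k * cnj (w $ j))"
    by (simp add: sum_distrib_right)
  also have "\<dots> = (\<Sum>k<n. \<Sum>j<n. U $$ (j,k) * v $ k * cnj (w $ j))"
    by (rule sum.swap)
  also have "\<dots> = (\<Sum>k<n. v $ k * (\<Sum>j<n. cnj (mat_adjoint U $$ (k,j)) * cnj (w $ j)))"
    unfolding sum_distrib_left by (intro sum.cong refl) (simp add: adj_index[OF U] mult_ac)
  also have "\<dots> = hinner v (mat_adjoint U *\<^sub>v w)"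
    using assms adj_carrier[OF U] by (simp add: hinner_sum[of _ n] mv_index del: index_mult_mat_vec)
  finally show ?thesis .
qed

lemma hnorm_hinner: assumes "v \<in> carrier_vec n"
  shows "hnorm v = sqrt (Re (hinner v v))"
proof -
  have "hinner v v = of_real (\<Sum>j<n. (cmod (v $ j))\<^sup>2)"
    unfolding hinner_sum[OF assms] of_real_sum by (intro sum.cong refl) (metis complex_norm_square)
  then show ?thesis using assms unfolding hnorm_def by simp
qed

lemma unitary_facts: assumes "unitary_op K n U"
  shows "U \<in> carrier_mat n n" "mat_adjoint U \<in> carrier_mat n n"
    "mat_adjoint U * U = 1\<^sub>m n" "U * mat_adjoint U = 1\<^sub>m n"
proof -
  show U: "U \<in> carrier_mat n n" using assms unfolding unitary_op_def by auto
  show V: "mat_adjoint U \<in> carrier_mat n n" by (rule adj_carrier[OF U])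
  show VU: "mat_adjoint U * U = 1\<^sub>m n" using assms unfolding unitary_op_def by auto
  show "U * mat_adjoint U = 1\<^sub>m n" by (rule mat_mult_left_right_inverse[OF V U VU])
qed

lemma mult_index2: assumes "A \<in> carrier_mat n n" "B \<in> carrier_mat n n" "j < n" "k < n"
  shows "(A * B) $$ (j,k) = (\<Sum>b<n. A $$ (j,b) * B $$ (b,k))"
  using assms by (simp add: scalar_prod_def atLeast0LessThan mult_ac)

lemma finsum_cong_lt: assumes "\<And>i. i < N \<Longrightarrow> a i = b i" "b \<in> {..<N} \<rightarrow> carrier_vec n"
  shows "finsum_vec TYPE(complex) n a {..<N} = finsum_vec TYPE(complex) n b {..<N}"
  unfolding finsum_vec_def using assms
  by (intro comm_monoid.finprod_cong'[OF comm_monoid_vec]) (auto simp: monoid_vec_simps)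

context
  fixes K n U V
  assumes un: "unitary_op K n U" and sf: "scalar_field K"
  defines "V \<equiv> mat_adjoint U"
begin

lemma U: "U \<in> carrier_mat n n" and V: "V \<in> carrier_mat n n"
  and VU: "V * U = 1\<^sub>m n" and UV: "U * V = 1\<^sub>m n"
  using unitary_facts[OF un] unfolding V_def by auto

lemma UV_vec: "v \<in> carrier_vec n \<Longrightarrow> U *\<^sub>v (V *\<^sub>v v) = v"
  using U V UV by (metis assoc_mult_mat_vec one_mult_mat_vec)

lemma VU_vec: "v \<in> carrier_vec n \<Longrightarrow> V *\<^sub>v (U *\<^sub>v v) = v"
  using U V VU by (metis assoc_mult_mat_vec one_mult_mat_vec)

lemma hinner_UU: "v \<in> carrier_vec n \<Longrightarrow> w \<in> carrier_vec n \<Longrightarrow> hinner (U *\<^sub>v v) (U *\<^sub>v w) = hinner v w"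
  using hinner_adj[OF U, of v "U *\<^sub>v w"] VU_vec U unfolding V_def by auto

lemma hinner_U_right: "f \<in> carrier_vec n \<Longrightarrow> x \<in> carrier_vec n \<Longrightarrow> hinner f (U *\<^sub>v x) = hinner (V *\<^sub>v f) x"
  using hinner_UU[of "V *\<^sub>v f" x] UV_vec V by auto

lemma hnorm_U: "v \<in> carrier_vec n \<Longrightarrow> hnorm (U *\<^sub>v v) = hnorm v"
  using hinner_UU[of v v] hnorm_hinner[of v n] hnorm_hinner[of "U *\<^sub>v v" n] U by auto

lemma hnorm_V: "v \<in> carrier_vec n \<Longrightarrow> hnorm (V *\<^sub>v v) = hnorm v"
  using hnorm_U[of "V *\<^sub>v v"] UV_vec V by auto

lemma entries_K: "j < n \<Longrightarrow> k < n \<Longrightarrow> U $$ (j,k) \<in> K" "j < n \<Longrightarrow> k < n \<Longrightarrow> V $$ (j,k) \<in> K"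
proof -
  show "j < n \<Longrightarrow> k < n \<Longrightarrow> U $$ (j,k) \<in> K" using un unfolding unitary_op_def by auto
  assume jk: "j < n" "k < n"
  have "U $$ (k,j) \<in> K" using un jk unfolding unitary_op_def by auto
  then show "V $$ (j,k) \<in> K" using sf jk adj_index[OF U jk] unfolding V_def scalar_field_def
    by (auto simp: Reals_cnj_iff)
qed

lemma hspace_mult: assumes M: "M \<in> carrier_mat n n" and MK: "\<And>j k. j < n \<Longrightarrow> k < n \<Longrightarrow> M $$ (j,k) \<in> K"
  and v: "v \<in> hspace K n" shows "M *\<^sub>v v \<in> hspace K n"
proof -
  have vc: "v \<in> carrier_vec n" using v unfolding hspace_def by auto
  { fix j assume j: "j < n"
    have "(M *\<^sub>v v) $ j \<in> K"
    proof (cases "K = \<real>")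
      case True
      then show ?thesis using v MK j unfolding mv_index[OF M vc j] hspace_def True
        by (auto intro!: sum_in_Reals Reals_mult)
    next
      case False
      then show ?thesis using sf unfolding scalar_field_def by auto
    qed }
  moreover have "M *\<^sub>v v \<in> carrier_vec n" using M vc by simp
  ultimately show ?thesis unfolding hspace_def by auto
qed

lemma hspace_U: "v \<in> hspace K n \<Longrightarrow> U *\<^sub>v v \<in> hspace K n"
  using hspace_mult[OF U entries_K(1)] by auto

lemma hspace_V: "v \<in> hspace K n \<Longrightarrow> V *\<^sub>v v \<in> hspace K n"
  using hspace_mult[OF V entries_K(2)] by auto

lemma hspace_carrier: "v \<in> hspace K n \<Longrightarrow> v \<in> carrier_vec n"
  unfolding hspace_def by auto

lemma frame_U: assumes "is_frame K n N F" shows "is_frame K n N (\<lambda>i. U *\<^sub>v F i)"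
proof -
  from assms obtain A B where FK: "\<forall>i<N. F i \<in> hspace K n" and AB: "A > 0" "B > 0"
    and bnd: "\<forall>f\<in>hspace K n. A * (hnorm f)\<^sup>2 \<le> (\<Sum>i<N. (cmod (hinner f (F i)))\<^sup>2) \<and>
        (\<Sum>i<N. (cmod (hinner f (F i)))\<^sup>2) \<le> B * (hnorm f)\<^sup>2"
    unfolding is_frame_def by blast
  have "\<forall>f\<in>hspace K n. A * (hnorm f)\<^sup>2 \<le> (\<Sum>i<N. (cmod (hinner f (U *\<^sub>v F i)))\<^sup>2) \<and>
        (\<Sum>i<N. (cmod (hinner f (U *\<^sub>v F i)))\<^sup>2) \<le> B * (hnorm f)\<^sup>2"
  proof
    fix f assume f: "f \<in> hspace K n"
    have fc: "f \<in> carrier_vec n" using f hspace_carrier by auto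
    have s: "(\<Sum>i<N. (cmod (hinner f (U *\<^sub>v F i)))\<^sup>2) = (\<Sum>i<N. (cmod (hinner (V *\<^sub>v f) (F i)))\<^sup>2)"
      using FK fc hinner_U_right hspace_carrier by (intro sum.cong refl) auto
    have nf: "hnorm f = hnorm (V *\<^sub>v f)" using hnorm_V fc by auto
    show "A * (hnorm f)\<^sup>2 \<le> (\<Sum>i<N. (cmod (hinner f (U *\<^sub>v F i)))\<^sup>2) \<and>
        (\<Sum>i<N. (cmod (hinner f (U *\<^sub>v F i)))\<^sup>2) \<le> B * (hnorm f)\<^sup>2"
      unfolding s nf using bnd hspace_V[OF f] by blast
  qed
  then show ?thesis unfolding is_frame_def using AB FK hspace_U by blast
qed

lemma finsum_U: fixes N :: nat assumes x: "\<forall>i<N. x i \<in> carrier_vec n"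
  shows "finsum_vec TYPE(complex) n (\<lambda>i. c i \<cdot>\<^sub>v (U *\<^sub>v x i)) {..<N}
       = U *\<^sub>v finsum_vec TYPE(complex) n (\<lambda>i. c i \<cdot>\<^sub>v x i) {..<N}"
proof -
  have c1: "(\<lambda>i. c i \<cdot>\<^sub>v x i) \<in> {..<N} \<rightarrow> carrier_vec n" using x by auto
  have c2: "(\<lambda>i. c i \<cdot>\<^sub>v (U *\<^sub>v x i)) \<in> {..<N} \<rightarrow> carrier_vec n" using x U by auto
  have cl1: "finsum_vec TYPE(complex) n (\<lambda>i. c i \<cdot>\<^sub>v x i) {..<N} \<in> carrier_vec n"
    by (rule finsum_vec_closed[OF c1])
  have cl2: "finsum_vec TYPE(complex) n (\<lambda>i. c i \<cdot>\<^sub>v (U *\<^sub>v x i)) {..<N} \<in> carrier_vec n"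
    by (rule finsum_vec_closed[OF c2])
  have idx1: "finsum_vec TYPE(complex) n (\<lambda>i. c i \<cdot>\<^sub>v x i) {..<N} $ k = (\<Sum>i<N. (c i \<cdot>\<^sub>v x i) $ k)"
    if "k < n" for k by (rule index_finsum_vec) (use c1 that in auto)
  have idx2: "finsum_vec TYPE(complex) n (\<lambda>i. c i \<cdot>\<^sub>v (U *\<^sub>v x i)) {..<N} $ k = (\<Sum>i<N. (c i \<cdot>\<^sub>v (U *\<^sub>v x i)) $ k)"
    if "k < n" for k by (rule index_finsum_vec) (use c2 that in auto)
  show ?thesis
  proof (rule eq_vecI)
    show "dim_vec (finsum_vec TYPE(complex) n (\<lambda>i. c i \<cdot>\<^sub>v (U *\<^sub>v x i)) {..<N}) =
      dim_vec (U *\<^sub>v finsum_vec TYPE(complex) n (\<lambda>i. c i \<cdot>\<^sub>v x i) {..<N})" using cl2 U by simp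
    fix j assume "j < dim_vec (U *\<^sub>v finsum_vec TYPE(complex) n (\<lambda>i. c i \<cdot>\<^sub>v x i) {..<N})"
    then have j: "j < n" using U by simp
    have "finsum_vec TYPE(complex) n (\<lambda>i. c i \<cdot>\<^sub>v (U *\<^sub>v x i)) {..<N} $ j
       = (\<Sum>i<N. c i * (\<Sum>k<n. U $$ (j,k) * x i $ k))"
      unfolding idx2[OF j]
      using x U j by (intro sum.cong refl) (simp add: mv_index del: index_mult_mat_vec)
    also have "\<dots> = (\<Sum>k<n. \<Sum>i<N. U $$ (j,k) * (c i * x i $ k))"
      unfolding sum_distrib_left by (subst sum.swap) (simp add: mult_ac)
    also have "\<dots> = (U *\<^sub>v finsum_vec TYPE(complex) n (\<lambda>i. c i \<cdot>\<^sub>v x i) {..<N}) $ j"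
      unfolding mv_index[OF U cl1 j]
      using x j idx1 by (auto simp: sum_distrib_left intro!: sum.cong)
    finally show "finsum_vec TYPE(complex) n (\<lambda>i. c i \<cdot>\<^sub>v (U *\<^sub>v x i)) {..<N} $ j =
      (U *\<^sub>v finsum_vec TYPE(complex) n (\<lambda>i. c i \<cdot>\<^sub>v x i) {..<N}) $ j" .
  qed
qed

lemma dual_U: assumes "dual_pair K n N F G"
  shows "dual_pair K n N (\<lambda>i. U *\<^sub>v F i) (\<lambda>i. U *\<^sub>v G i)"
proof -
  have fF: "is_frame K n N F" and fG: "is_frame K n N G" using assms unfolding dual_pair_def by auto
  have Fc: "\<forall>i<N. F i \<in> carrier_vec n" and Gc: "\<forall>i<N. G i \<in> carrier_vec n"
    using fF fG hspace_carrier unfolding is_frame_def by auto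
  have rec: "\<And>f. f \<in> hspace K n \<Longrightarrow> f = finsum_vec TYPE(complex) n (\<lambda>i. hinner f (F i) \<cdot>\<^sub>v G i) {..<N} \<and>
        f = finsum_vec TYPE(complex) n (\<lambda>i. hinner f (G i) \<cdot>\<^sub>v F i) {..<N}"
    using assms unfolding dual_pair_def by auto
  have "f = finsum_vec TYPE(complex) n (\<lambda>i. hinner f (U *\<^sub>v F i) \<cdot>\<^sub>v (U *\<^sub>v G i)) {..<N} \<and>
        f = finsum_vec TYPE(complex) n (\<lambda>i. hinner f (U *\<^sub>v G i) \<cdot>\<^sub>v (U *\<^sub>v F i)) {..<N}"
    if f: "f \<in> hspace K n" for f
  proof -
    have fc: "f \<in> carrier_vec n" using f hspace_carrier by auto
    have r: "V *\<^sub>v f = finsum_vec TYPE(complex) n (\<lambda>i. hinner (V *\<^sub>v f) (F i) \<cdot>\<^sub>v G i) {..<N} \<and>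
        V *\<^sub>v f = finsum_vec TYPE(complex) n (\<lambda>i. hinner (V *\<^sub>v f) (G i) \<cdot>\<^sub>v F i) {..<N}"
      using rec[OF hspace_V[OF f]] .
    have "finsum_vec TYPE(complex) n (\<lambda>i. hinner f (U *\<^sub>v F i) \<cdot>\<^sub>v (U *\<^sub>v G i)) {..<N}
        = finsum_vec TYPE(complex) n (\<lambda>i. hinner (V *\<^sub>v f) (F i) \<cdot>\<^sub>v (U *\<^sub>v G i)) {..<N}"
      using Fc Gc fc U by (intro finsum_cong_lt) (auto simp: hinner_U_right)
    also have "\<dots> = U *\<^sub>v (V *\<^sub>v f)" using r finsum_U[OF Gc] by metis
    finally have 1: "f = finsum_vec TYPE(complex) n (\<lambda>i. hinner f (U *\<^sub>v F i) \<cdot>\<^sub>v (U *\<^sub>v G i)) {..<N}"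
      using UV_vec[OF fc] by simp
    have "finsum_vec TYPE(complex) n (\<lambda>i. hinner f (U *\<^sub>v G i) \<cdot>\<^sub>v (U *\<^sub>v F i)) {..<N}
        = finsum_vec TYPE(complex) n (\<lambda>i. hinner (V *\<^sub>v f) (G i) \<cdot>\<^sub>v (U *\<^sub>v F i)) {..<N}"
      using Fc Gc fc U by (intro finsum_cong_lt) (auto simp: hinner_U_right)
    also have "\<dots> = U *\<^sub>v (V *\<^sub>v f)" using r finsum_U[OF Fc] by metis
    finally have 2: "f = finsum_vec TYPE(complex) n (\<lambda>i. hinner f (U *\<^sub>v G i) \<cdot>\<^sub>v (U *\<^sub>v F i)) {..<N}"
      using UV_vec[OF fc] by simp
    show ?thesis using 1 2 by blast
  qed
  then show ?thesis unfolding dual_pair_def using frame_U fF fG by blast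
qed

lemma err_op_U: assumes Fc: "F i \<in> carrier_vec n" and Gc: "G i \<in> carrier_vec n"
  shows "err_op n q (\<lambda>i. U *\<^sub>v F i) (\<lambda>i. U *\<^sub>v G i) i = U * err_op n q F G i * V"
proof -
  let ?E = "err_op n q F G i"
  have E: "?E \<in> carrier_mat n n" unfolding err_op_def by simp
  have UE: "U * ?E \<in> carrier_mat n n" using U E by simp
  show ?thesis
  proof (rule eq_matI)
    fix j k assume "j < dim_row (U * ?E * V)" "k < dim_col (U * ?E * V)"
    then have j: "j < n" and k: "k < n" using U V by auto
    let ?c = "complex_of_real (q i)"
    have "(U * ?E * V) $$ (j,k) = (\<Sum>b<n. (\<Sum>a<n. U $$ (j,a) * ?E $$ (a,b)) * V $$ (b,k))"
      unfolding mult_index2[OF UE V j k] using j U E by (intro sum.cong refl) (simp add: mult_index2[OF U E j] del: index_mult_mat)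
    also have "\<dots> = (\<Sum>b<n. \<Sum>a<n. ?c * (U $$ (j,a) * G i $ a) * (cnj (U $$ (k,b)) * cnj (F i $ b)))"
      unfolding sum_distrib_right using k
      by (intro sum.cong refl) (simp add: err_op_def V_def adj_index[OF U] mult_ac)
    also have "\<dots> = (\<Sum>a<n. \<Sum>b<n. ?c * (U $$ (j,a) * G i $ a) * (cnj (U $$ (k,b)) * cnj (F i $ b)))"
      by (rule sum.swap)
    also have "\<dots> = ?c * ((\<Sum>a<n. U $$ (j,a) * G i $ a) * (\<Sum>b<n. cnj (U $$ (k,b)) * cnj (F i $ b)))"
      by (simp only: sum_product) (simp add: sum_distrib_left mult_ac)
    also have "\<dots> = ?c * (\<Sum>a<n. U $$ (j,a) * G i $ a) * cnj (\<Sum>b<n. U $$ (k,b) * F i $ b)"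
      by (simp add: mult.assoc)
    also have "\<dots> = err_op n q (\<lambda>i. U *\<^sub>v F i) (\<lambda>i. U *\<^sub>v G i) i $$ (j,k)"
      unfolding err_op_def using j k by (simp add: mv_index[OF U Fc] mv_index[OF U Gc] del: index_mult_mat_vec)
    finally show "err_op n q (\<lambda>i. U *\<^sub>v F i) (\<lambda>i. U *\<^sub>v G i) i $$ (j,k) = (U * ?E * V) $$ (j,k)" by simp
  qed (insert U V, auto simp: err_op_def)
qed

lemma spec_U: assumes E: "E \<in> carrier_mat n n"
  shows "spectral_radius (U * E * V) = spectral_radius E"
proof -
  have UEV: "U * E * V \<in> carrier_mat n n" using U V E by simp
  have "similar_mat (U * E * V) E"
    by (rule similar_matI[where P=U and Q=V and n=n]) (insert U V E UV VU, auto)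
  then have "char_poly (U * E * V) = char_poly E" by (rule char_poly_similar)
  then have "spectrum (U * E * V) = spectrum E"
    unfolding spectrum_root_char_poly[OF E] spectrum_root_char_poly[OF UEV] by simp
  then show ?thesis unfolding spectral_radius_def by simp
qed

lemma opnorm_U: assumes E: "E \<in> carrier_mat n n"
  shows "op_norm K n (U * E * V) = op_norm K n E"
proof -
  have key: "U * E * V *\<^sub>v v = U *\<^sub>v (E *\<^sub>v (V *\<^sub>v v))" if "v \<in> carrier_vec n" for v
    using that U V E by (metis assoc_mult_mat_vec mult_carrier_mat mult_mat_vec_carrier)
  have "{hnorm (U * E * V *\<^sub>v v) | v. v \<in> hspace K n \<and> hnorm v \<le> 1}
      = {hnorm (E *\<^sub>v w) | w. w \<in> hspace K n \<and> hnorm w \<le> 1}"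
  proof (rule equalityI; rule subsetI)
    fix x assume "x \<in> {hnorm (U * E * V *\<^sub>v v) | v. v \<in> hspace K n \<and> hnorm v \<le> 1}"
    then obtain v where v: "v \<in> hspace K n" "hnorm v \<le> 1" and x: "x = hnorm (U * E * V *\<^sub>v v)" by auto
    have vc: "v \<in> carrier_vec n" using v hspace_carrier by auto
    have "x = hnorm (E *\<^sub>v (V *\<^sub>v v))" unfolding x key[OF vc] using E V vc
      by (intro hnorm_U) auto
    moreover have "V *\<^sub>v v \<in> hspace K n" "hnorm (V *\<^sub>v v) \<le> 1" using hspace_V v hnorm_V vc by auto
    ultimately show "x \<in> {hnorm (E *\<^sub>v w) | w. w \<in> hspace K n \<and> hnorm w \<le> 1}" by blast
  next
    fix x assume "x \<in> {hnorm (E *\<^sub>v w) | w. w \<in> hspace K n \<and> hnorm w \<le> 1}"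
    then obtain w where w: "w \<in> hspace K n" "hnorm w \<le> 1" and x: "x = hnorm (E *\<^sub>v w)" by auto
    have wc: "w \<in> carrier_vec n" using w hspace_carrier by auto
    have "x = hnorm (U * E * V *\<^sub>v (U *\<^sub>v w))" unfolding x key[OF mult_mat_vec_carrier[OF U wc]] VU_vec[OF wc]
      using E wc by (intro hnorm_U[symmetric]) auto
    moreover have "U *\<^sub>v w \<in> hspace K n" "hnorm (U *\<^sub>v w) \<le> 1" using hspace_U w hnorm_U wc by auto
    ultimately show "x \<in> {hnorm (U * E * V *\<^sub>v v) | v. v \<in> hspace K n \<and> hnorm v \<le> 1}" by blast
  qed
  then show ?thesis unfolding op_norm_def by simp
qed

lemma A1_U: assumes "dual_pair K n N F G"
  shows "A1 K n N q (\<lambda>i. U *\<^sub>v F i) (\<lambda>i. U *\<^sub>v G i) = A1 K n N q F G"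
proof -
  have Fc: "\<forall>i<N. F i \<in> carrier_vec n" and Gc: "\<forall>i<N. G i \<in> carrier_vec n"
    using assms hspace_carrier unfolding dual_pair_def is_frame_def by auto
  have E: "err_op n q F G i \<in> carrier_mat n n" for i unfolding err_op_def by simp
  show ?thesis unfolding A1_def
    by (intro arg_cong[where f = Max] image_cong refl)
      (simp add: err_op_U Fc Gc spec_U[OF E] opnorm_U[OF E])
qed

end

theorem proposition4p2:
  fixes K :: "complex set" and n N :: nat and F G :: "nat \<Rightarrow> complex vec"
    and U :: "complex mat" and p :: "nat \<Rightarrow> real"
  assumes "scalar_field K"
    and "dual_pair K n N F G"
    and "unitary_op K n U"
    and "prob_seq N p"
  shows "(F, G) \<in> PASOD1 K n N (weight N n p)
     \<longleftrightarrow> ((\<lambda>i. U *\<^sub>v F i), (\<lambda>i. U *\<^sub>v G i)) \<in> PASOD1 K n N (weight N n p)"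
  using dual_U[OF assms(3,1,2)] A1_U[OF assms(3,1,2)] assms(2)
  unfolding PASOD1_def by auto

end
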